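(* Let $\mathcal{X}$ be finite with $|\mathcal{X}|\ge2$, $P$ a pmf on $\mathcal{X}$ with $P(x)>0$ for all $x$, and $L_{\rm th}>0$ satisfy $$H(P)+\log_2\big(1+1/\sqrt2\big)<L_{\rm th}.$$ Define $$\Delta^*(P)=\inf_{\ell\in\Lambda,\ \mathbb{E}[L]<L_{\rm th}}\ \sup_{z\ge0}\ \sup_{Q}\Big(\sum_{x}\tilde g_{z,Q,P}(x)\ell(x)-\frac{z^2}{2}L_{\rm th}\Big),$$ $Q$ ranging over pmfs on $\mathcal{X}$ and $L=\ell(X)$, $X\sim P$. Then $\Delta^*(P)=\inf_{\ell\in\Lambda,\ \mathbb{E}[L]<L_{\rm th}}\Big(\mathbb{E}[L]+\frac{\mathbb{E}[L^2]}{2(L_{\rm th}-\mathbb{E}[L])}\Big)$, and $$\Delta^*(P)=\max_{z\ge0}\max_{Q}\ \min_{\ell\in\Lambda,\ \mathbb{E}[L]<L_{\rm th}}\Big(\sum_x\tilde g_{z,Q,P}(x)\ell(x)-\frac{z^2}{2}L_{\rm th}\Big)=\max_{z\ge0}\max_{Q}\Big(\sum_{x}\tilde g_{z,Q,P}(x)\log_2\frac{\sum_{x'}\tilde g_{z,Q,P}(x')}{\tilde g_{z,Q,P}(x)}-\frac{z^2}{2}L_{\rm th}\Big).$$ Moreover, if $(z^*,Q^* )$ maximizes the last expression, then $\Delta^*(P)$ is attained uniquely by the lengths $\ell^*(x)=-\log_2P^*(x)$, where $P^*(x)=\tilde g_{z^*,Q^*,P}(x)/\sum_{x'}\tilde 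g_{z^*,Q^*,P}(x')$.
   Context: $\Lambda=\{\ell\in\mathbb{R}_+^{\mathcal{X}}:\sum_{x}2^{-\ell(x)}\le1\}$. $\tilde g_{z,Q,P}(x)=\big(1+\frac{z^2}{2}\big)P(x)+z\sqrt{Q(x)P(x)}$. $H(P)=-\sum_xP(x)\log_2P(x)$. Motivation: $\mathbb{E}[L]+\frac{\mathbb{E}[L^2]}{2(L_{\rm th}-\mathbb{E}[L])}$ is the average waiting time in an M/G/1 FCFS queue with arrival rate $1/L_{\rm th}$ and service times distributed as the codeword length $L$. *)

theory Defs
  imports Complex_Main
begin

definition Lam :: "('a::finite \<Rightarrow> real) set" where
  "Lam = {l. (\<forall>x. 0 \<le> l x) \<and> (\<Sum>x\<in>UNIV. 2 powr (- l x)) \<le> 1}"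

definition pmfs :: "('a::finite \<Rightarrow> real) set" where
  "pmfs = {Q. (\<forall>x. 0 \<le> Q x) \<and> (\<Sum>x\<in>UNIV. Q x) = 1}"

definition entropy :: "('a::finite \<Rightarrow> real) \<Rightarrow> real" where
  "entropy P = - (\<Sum>x\<in>UNIV. P x * log 2 (P x))"

definition gt :: "real \<Rightarrow> ('a::finite \<Rightarrow> real) \<Rightarrow> ('a \<Rightarrow> real) \<Rightarrow> 'a \<Rightarrow> real" where
  "gt z Q P x = (1 + z^2 / 2) * P x + z * sqrt (Q x * P x)"

definition expect :: "('a::finite \<Rightarrow> real) \<Rightarrow> ('a \<Rightarrow> real) \<Rightarrow> real" where
  "expect P f = (\<Sum>x\<in>UNIV. P x * f x)"

definition feasible :: "('a::finite \<Rightarrow> real) \<Rightarrow> real \<Rightarrow> ('a \<Rightarrow> real) set" where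
  "feasible P Lth = {l \<in> Lam. expect P l < Lth}"

definition obj :: "('a::finite \<Rightarrow> real) \<Rightarrow> real \<Rightarrow> real \<Rightarrow> ('a \<Rightarrow> real) \<Rightarrow> ('a \<Rightarrow> real) \<Rightarrow> real" where
  "obj P Lth z Q l = (\<Sum>x\<in>UNIV. gt z Q P x * l x) - z^2 / 2 * Lth"

definition Phi :: "('a::finite \<Rightarrow> real) \<Rightarrow> real \<Rightarrow> ('a \<Rightarrow> real) \<Rightarrow> real" where
  "Phi P Lth l = (SUP z\<in>{0..}. SUP Q\<in>pmfs. obj P Lth z Q l)"

definition Delta_star :: "('a::finite \<Rightarrow> real) \<Rightarrow> real \<Rightarrow> real" where
  "Delta_star P Lth = (INF l\<in>feasible P Lth. Phi P Lth l)"

definition gibbs_val :: "('a::finite \<Rightarrow> real) \<Rightarrow> real \<Rightarrow> real \<Rightarrow> ('a \<Rightarrow> real) \<Rightarrow> real" where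
  "gibbs_val P Lth z Q =
     (\<Sum>x\<in>UNIV. gt z Q P x * log 2 ((\<Sum>x'\<in>UNIV. gt z Q P x') / gt z Q P x)) - z^2 / 2 * Lth"

definition is_max_val :: "real set \<Rightarrow> real \<Rightarrow> bool" where
  "is_max_val S v \<longleftrightarrow> v \<in> S \<and> (\<forall>y\<in>S. y \<le> v)"

end

theory Submission imports Defs "HOL-Analysis.Analysis" begin

lemma gibbs_ineq:
  fixes g l :: "'a::finite \<Rightarrow> real"
  assumes g: "\<And>x. g x > 0" and l: "l \<in> Lam"
  shows "(\<Sum>x\<in>UNIV. g x * log 2 ((\<Sum>y\<in>UNIV. g y) / g x)) \<le> (\<Sum>x\<in>UNIV. g x * l x)"
    and "(\<Sum>x\<in>UNIV. g x * log 2 ((\<Sum>y\<in>UNIV. g y) / g x)) = (\<Sum>x\<in>UNIV. g x * l x)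
         \<Longrightarrow> l = (\<lambda>x. - log 2 (g x / (\<Sum>y\<in>UNIV. g y)))"
proof -
  define S where "S = (\<Sum>y\<in>UNIV. g y)"
  have S: "S > 0" unfolding S_def using g by (simp add: sum_pos)
  define r where "r x = 2 powr (- l x) * S / g x" for x
  have rpos: "r x > 0" for x using S g[of x] by (simp add: r_def)
  have lnr: "ln (r x) = ln 2 * (log 2 (S / g x) - l x)" for x
    using S g[of x] by (simp add: r_def ln_mult ln_div log_def field_simps)
  have kr: "(\<Sum>x\<in>UNIV. 2 powr (- l x)) \<le> 1" using l by (simp add: Lam_def)
  have "(\<Sum>x\<in>UNIV. g x * (r x - 1)) = S * (\<Sum>x\<in>UNIV. 2 powr (- l x)) - S"
  proof -
    have "g x * (r x - 1) = S * 2 powr (- l x) - g x" for x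
      using g[of x] by (simp add: r_def field_simps)
    then show ?thesis by (simp add: sum_subtractf sum_distrib_left S_def[symmetric])
  qed
  also have "\<dots> \<le> 0" using kr S by (simp add: mult_le_cancel_left1)
  finally have s1: "(\<Sum>x\<in>UNIV. g x * (r x - 1)) \<le> 0" .
  have each: "g x * ln (r x) \<le> g x * (r x - 1)" for x
    using ln_le_minus_one[OF rpos[of x]] g[of x] by (simp add: mult_left_mono)
  have eq: "(\<Sum>x\<in>UNIV. g x * ln (r x)) = ln 2 * ((\<Sum>x\<in>UNIV. g x * log 2 (S / g x)) - (\<Sum>x\<in>UNIV. g x * l x))"
    by (simp add: lnr sum_distrib_left sum_subtractf algebra_simps)
  have "(\<Sum>x\<in>UNIV. g x * ln (r x)) \<le> 0"
    using sum_mono[of UNIV "\<lambda>x. g x * ln (r x)" "\<lambda>x. g x * (r x - 1)"] each s1 by force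
  then show "(\<Sum>x\<in>UNIV. g x * log 2 ((\<Sum>y\<in>UNIV. g y) / g x)) \<le> (\<Sum>x\<in>UNIV. g x * l x)"
    unfolding eq S_def[symmetric] by (simp add: mult_le_0_iff)
  assume A: "(\<Sum>x\<in>UNIV. g x * log 2 ((\<Sum>y\<in>UNIV. g y) / g x)) = (\<Sum>x\<in>UNIV. g x * l x)"
  then have z: "(\<Sum>x\<in>UNIV. g x * ln (r x)) = 0" unfolding eq S_def by simp
  have "(\<Sum>x\<in>UNIV. g x * (r x - 1) - g x * ln (r x)) \<le> 0"
    using s1 z by (simp add: sum_subtractf)
  moreover have nn: "\<forall>x\<in>UNIV. 0 \<le> g x * (r x - 1) - g x * ln (r x)" using each by auto
  ultimately have "(\<Sum>x\<in>UNIV. g x * (r x - 1) - g x * ln (r x)) = 0"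
    using sum_nonneg[of UNIV] by (meson antisym nn sum_nonneg)
  then have "\<forall>x\<in>UNIV. g x * (r x - 1) - g x * ln (r x) = 0"
    using sum_nonneg_eq_0_iff[of UNIV "\<lambda>x. g x * (r x - 1) - g x * ln (r x)"] nn by simp
  then have "ln (r x) = r x - 1" for x
  proof -
    assume h: "\<forall>x\<in>UNIV. g x * (r x - 1) - g x * ln (r x) = 0"
    have "g x * (r x - 1 - ln (r x)) = 0" using h by (simp add: algebra_simps)
    then show ?thesis using g[of x] by simp
  qed
  then have r1: "r x = 1" for x using ln_eq_minus_one rpos by blast
  show "l = (\<lambda>x. - log 2 (g x / (\<Sum>y\<in>UNIV. g y)))"
  proof
    fix x
    have "2 powr (- l x) = g x / S" using r1[of x] S g[of x] by (simp add: r_def field_simps)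
    then have "log 2 (2 powr (- l x)) = log 2 (g x / S)" by simp
    then show "l x = - log 2 (g x / (\<Sum>y\<in>UNIV. g y))" unfolding S_def[symmetric] by simp
  qed
qed

lemma gibbs_ls:
  fixes g :: "'a::finite \<Rightarrow> real"
  assumes g: "\<And>x. g x > 0"
  shows "(\<lambda>x. - log 2 (g x / (\<Sum>y\<in>UNIV. g y))) \<in> Lam"
    and "(\<Sum>x\<in>UNIV. g x * (- log 2 (g x / (\<Sum>y\<in>UNIV. g y)))) = (\<Sum>x\<in>UNIV. g x * log 2 ((\<Sum>y\<in>UNIV. g y) / g x))"
proof -
  define S where "S = (\<Sum>y\<in>UNIV. g y)"
  have S: "S > 0" unfolding S_def using g by (simp add: sum_pos)
  have gle: "g x \<le> S" for x unfolding S_def using g by (intro member_le_sum) (auto intro: less_imp_le)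
  have "0 \<le> - log 2 (g x / S)" for x
  proof -
    have "g x / S \<le> 1" using gle[of x] S by simp
    then have "log 2 (g x / S) \<le> 0" using g[of x] S by (simp add: log_le_zero_cancel_iff)
    then show ?thesis by simp
  qed
  moreover have "(\<Sum>x\<in>UNIV. 2 powr (- (- log 2 (g x / S)))) = 1"
  proof -
    have "(\<Sum>x\<in>UNIV. 2 powr (- (- log 2 (g x / S)))) = (\<Sum>x\<in>UNIV. g x / S)"
      using g S by (intro sum.cong) auto
    also have "\<dots> = 1" using S by (simp add: sum_divide_distrib[symmetric] S_def)
    finally show ?thesis .
  qed
  ultimately show "(\<lambda>x. - log 2 (g x / (\<Sum>y\<in>UNIV. g y))) \<in> Lam"
    unfolding Lam_def S_def[symmetric] by simp
  have "- log 2 (g x / S) = log 2 (S / g x)" for x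
    using g[of x] S by (simp add: log_divide)
  then show "(\<Sum>x\<in>UNIV. g x * (- log 2 (g x / (\<Sum>y\<in>UNIV. g y)))) = (\<Sum>x\<in>UNIV. g x * log 2 ((\<Sum>y\<in>UNIV. g y) / g x))"
    unfolding S_def[symmetric] by simp
qed

definition F :: "('a::finite \<Rightarrow> real) \<Rightarrow> real \<Rightarrow> ('a \<Rightarrow> real) \<Rightarrow> real" where
  "F P Lth l = expect P l + expect P (\<lambda>x. (l x)^2) / (2 * (Lth - expect P l))"

lemma obj_expand:
  "obj P Lth z Q l = (1 + z^2/2) * expect P l + z * (\<Sum>x\<in>UNIV. sqrt (Q x * P x) * l x) - z^2/2 * Lth"
  by (simp add: obj_def gt_def expect_def algebra_simps sum.distrib sum_distrib_left)

lemma obj_le_F: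
  fixes P Q l :: "'a::finite \<Rightarrow> real"
  assumes P: "\<And>x. P x > 0" and Q: "Q \<in> pmfs" and z: "z \<ge> 0" and D: "expect P l < Lth"
  shows "obj P Lth z Q l \<le> F P Lth l"
proof -
  define D where "D = Lth - expect P l"
  have Dp: "D > 0" using D by (simp add: D_def)
  have Q0: "Q x \<ge> 0" for x using Q by (simp add: pmfs_def)
  have sQ: "(\<Sum>x\<in>UNIV. Q x) = 1" using Q by (simp add: pmfs_def)
  have trm: "z * (sqrt (Q x * P x) * l x) \<le> z^2 * D / 2 * Q x + P x * (l x)^2 / (2 * D)" for x
  proof -
    define u where "u = sqrt (Q x)"
    define v where "v = sqrt (P x)"
    have uq: "u^2 = Q x" using Q0[of x] by (simp add: u_def)
    have vp: "v^2 = P x" using P[of x] by (simp add: v_def less_imp_le)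
    have sq: "sqrt (Q x * P x) = u * v" by (simp add: u_def v_def real_sqrt_mult)
    have "0 \<le> (z * D * u - v * l x)^2" by simp
    then have "2 * D * (z * (u * v * l x)) \<le> z^2 * D^2 * u^2 + v^2 * (l x)^2"
      by (simp add: power2_eq_square algebra_simps)
    then have "z * (u * v * l x) \<le> (z^2 * D^2 * u^2 + v^2 * (l x)^2) / (2 * D)"
      using Dp by (simp add: field_simps)
    also have "\<dots> = z^2 * D / 2 * u^2 + v^2 * (l x)^2 / (2 * D)"
      using Dp by (simp add: field_simps power2_eq_square)
    finally show ?thesis unfolding sq uq vp .
  qed
  have "z * (\<Sum>x\<in>UNIV. sqrt (Q x * P x) * l x) \<le> (\<Sum>x\<in>UNIV. z^2 * D / 2 * Q x + P x * (l x)^2 / (2 * D))"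
    unfolding sum_distrib_left by (rule sum_mono) (rule trm)
  also have "\<dots> = z^2 * D / 2 + expect P (\<lambda>x. (l x)^2) / (2 * D)"
    by (simp add: sum.distrib sum_distrib_left[symmetric] sum_divide_distrib[symmetric] sQ expect_def)
  finally have s: "z * (\<Sum>x\<in>UNIV. sqrt (Q x * P x) * l x) \<le> z^2 * D / 2 + expect P (\<lambda>x. (l x)^2) / (2 * D)" .
  have e: "(1 + z^2/2) * expect P l - z^2/2 * Lth = expect P l - z^2 * D / 2"
    by (simp add: D_def field_simps)
  show ?thesis unfolding obj_expand F_def D_def[symmetric] using s e by linarith
qed


lemma opt_point:
  fixes P l :: "'a::finite \<Rightarrow> real"
  assumes P: "\<And>x. P x > 0" and sP: "(\<Sum>x\<in>UNIV. P x) = 1" and l0: "\<And>x. l x \<ge> 0"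
    and m_def: "m = expect P (\<lambda>x. (l x)^2)" and D_def: "D = Lth - expect P l"
    and Dp: "D > 0" and mp: "m > 0"
  shows "(\<lambda>x. P x * (l x)^2 / m) \<in> pmfs"
    and "sqrt m / D \<ge> 0"
    and "gt (sqrt m / D) (\<lambda>x. P x * (l x)^2 / m) P x = P x * (1 + m / (2 * D^2) + l x / D)"
    and "obj P Lth (sqrt m / D) (\<lambda>x. P x * (l x)^2 / m) l = F P Lth l"
proof -
  show "(\<lambda>x. P x * (l x)^2 / m) \<in> pmfs"
    unfolding pmfs_def using P mp
    by (auto simp: sum_divide_distrib[symmetric] m_def expect_def less_imp_le)
  show "sqrt m / D \<ge> 0" using Dp mp by simp
  have g: "gt (sqrt m / D) (\<lambda>x. P x * (l x)^2 / m) P x = P x * (1 + m / (2 * D^2) + l x / D)" for x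
  proof -
    have "sqrt (P x * (l x)^2 / m * P x) = P x * l x / sqrt m"
    proof -
      have "P x * (l x)^2 / m * P x = (P x * l x)^2 / m" by (simp add: power2_eq_square)
      then show ?thesis using P[of x] l0[of x] mp by (simp add: real_sqrt_divide)
    qed
    then show ?thesis unfolding gt_def using mp Dp
      by (simp add: field_simps power2_eq_square)
  qed
  then show "gt (sqrt m / D) (\<lambda>x. P x * (l x)^2 / m) P x = P x * (1 + m / (2 * D^2) + l x / D)" for x .
  have "(\<Sum>x\<in>UNIV. gt (sqrt m / D) (\<lambda>x. P x * (l x)^2 / m) P x * l x)
      = (\<Sum>x\<in>UNIV. (1 + m / (2 * D^2)) * (P x * l x) + (P x * (l x)^2) / D)"
    unfolding g by (intro sum.cong) (auto simp: algebra_simps power2_eq_square)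
  also have "\<dots> = (1 + m / (2 * D^2)) * expect P l + m / D"
    by (simp add: sum.distrib sum_distrib_left[symmetric] sum_divide_distrib[symmetric] m_def expect_def)
  finally have s: "(\<Sum>x\<in>UNIV. gt (sqrt m / D) (\<lambda>x. P x * (l x)^2 / m) P x * l x) = (1 + m / (2 * D^2)) * expect P l + m / D" .
  have "(sqrt m / D)^2 = m / D^2" using mp by (simp add: power_divide)
  then have "obj P Lth (sqrt m / D) (\<lambda>x. P x * (l x)^2 / m) l = (1 + m / (2 * D^2)) * expect P l + m / D - m / D^2 / 2 * Lth"
    unfolding obj_def s by simp
  also have "\<dots> = expect P l + m / (2 * D)"
  proof -
    have L: "Lth = expect P l + D" using D_def by simp
    show ?thesis unfolding L using Dp by (simp add: field_simps power2_eq_square)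
  qed
  also have "\<dots> = F P Lth l" unfolding F_def m_def D_def by simp
  finally show "obj P Lth (sqrt m / D) (\<lambda>x. P x * (l x)^2 / m) l = F P Lth l" .
qed

lemma m_pos:
  fixes P l :: "'a::finite \<Rightarrow> real"
  assumes card: "card (UNIV :: 'a set) \<ge> 2" and P: "\<And>x. P x > 0" and l: "l \<in> Lam"
  shows "expect P (\<lambda>x. (l x)^2) > 0"
proof -
  have l0: "\<And>x. l x \<ge> 0" using l by (simp add: Lam_def)
  have "\<exists>x. l x \<noteq> 0"
  proof (rule ccontr)
    assume "\<not> (\<exists>x. l x \<noteq> 0)"
    then have "(\<Sum>x\<in>UNIV. 2 powr (- l x)) = real (card (UNIV :: 'a set))" by simp
    then show False using l card by (simp add: Lam_def)
  qed
  then obtain x where "l x \<noteq> 0" by blast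
  then have "P x * (l x)^2 > 0" using P[of x] by simp
  then show ?thesis unfolding expect_def
    by (intro sum_pos2[of UNIV x]) (auto intro!: mult_nonneg_nonneg less_imp_le[OF P])
qed

lemma Phi_eq:
  fixes P l :: "'a::finite \<Rightarrow> real"
  assumes card: "card (UNIV :: 'a set) \<ge> 2" and P: "\<And>x. P x > 0" and sP: "(\<Sum>x\<in>UNIV. P x) = 1"
    and l: "l \<in> feasible P Lth"
  shows "Phi P Lth l = F P Lth l"
proof -
  have lL: "l \<in> Lam" and lt: "expect P l < Lth" using l by (auto simp: feasible_def)
  have l0: "\<And>x. l x \<ge> 0" using lL by (simp add: Lam_def)
  define m where "m = expect P (\<lambda>x. (l x)^2)"
  define D where "D = Lth - expect P l"
  have mp: "m > 0" unfolding m_def by (rule m_pos[OF card P lL])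
  have Dp: "D > 0" using lt by (simp add: D_def)
  note op = opt_point[OF P sP l0 m_def D_def Dp mp]
  define z0 where "z0 = sqrt m / D"
  define Q0 where "Q0 = (\<lambda>x. P x * (l x)^2 / m)"
  have Q0: "Q0 \<in> pmfs" and z0: "z0 \<ge> 0" and oq: "obj P Lth z0 Q0 l = F P Lth l"
    using op by (auto simp: z0_def Q0_def)
  have ne: "(pmfs :: ('a \<Rightarrow> real) set) \<noteq> {}" using Q0 by auto
  have inner_le: "(SUP Q\<in>pmfs. obj P Lth z Q l) \<le> F P Lth l" if "z \<ge> 0" for z
    by (rule cSUP_least[OF ne]) (rule obj_le_F[OF P _ that lt])
  have bdd: "bdd_above ((\<lambda>Q. obj P Lth z Q l) ` pmfs)" if "z \<ge> 0" for z
    by (rule bdd_aboveI2[where M="F P Lth l"]) (rule obj_le_F[OF P _ that lt])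
  have inner_ge: "F P Lth l \<le> (SUP Q\<in>pmfs. obj P Lth z0 Q l)"
    using cSUP_upper[OF Q0 bdd[OF z0]] oq by simp
  have "(SUP z\<in>{0..}. SUP Q\<in>pmfs. obj P Lth z Q l) = F P Lth l"
  proof (rule antisym)
    show "(SUP z\<in>{0..}. SUP Q\<in>pmfs. obj P Lth z Q l) \<le> F P Lth l"
      by (rule cSUP_least) (auto intro: inner_le)
    have "bdd_above ((\<lambda>z. SUP Q\<in>pmfs. obj P Lth z Q l) ` {0..})"
      by (rule bdd_aboveI2[where M="F P Lth l"]) (auto intro: inner_le)
    then have "(SUP Q\<in>pmfs. obj P Lth z0 Q l) \<le> (SUP z\<in>{0..}. SUP Q\<in>pmfs. obj P Lth z Q l)"
      using z0 by (intro cSUP_upper) auto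
    then show "F P Lth l \<le> (SUP z\<in>{0..}. SUP Q\<in>pmfs. obj P Lth z Q l)" using inner_ge by linarith
  qed
  then show ?thesis by (simp add: Phi_def)
qed


lemma powr2_convex:
  fixes a b t :: real
  assumes "0 \<le> t" "t \<le> 1"
  shows "2 powr (- ((1 - t) * a + t * b)) \<le> (1 - t) * 2 powr (- a) + t * 2 powr (- b)"
proof -
  have "exp ((1 - t) *\<^sub>R (- a * ln 2) + t *\<^sub>R (- b * ln 2)) \<le> (1 - t) * exp (- a * ln 2) + t * exp (- b * ln 2)"
    using convex_onD[OF exp_convex] assms by blast
  moreover have "(1 - t) *\<^sub>R (- a * ln 2) + t *\<^sub>R (- b * ln 2) = - ((1 - t) * a + t * b) * ln 2"
    by (simp add: algebra_simps)
  ultimately show ?thesis by (simp add: powr_def)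
qed

lemma Lam_convex:
  fixes a b :: "'a::finite \<Rightarrow> real"
  assumes a: "a \<in> Lam" and b: "b \<in> Lam" and t: "0 \<le> t" "t \<le> 1"
  shows "(\<lambda>x. a x + t * (b x - a x)) \<in> Lam"
proof -
  have e: "a x + t * (b x - a x) = (1 - t) * a x + t * b x" for x by (simp add: algebra_simps)
  have "(\<Sum>x\<in>UNIV. 2 powr (- ((1 - t) * a x + t * b x))) \<le> (\<Sum>x\<in>UNIV. (1 - t) * 2 powr (- a x) + t * 2 powr (- b x))"
    by (rule sum_mono) (rule powr2_convex[OF t])
  also have "\<dots> = (1 - t) * (\<Sum>x\<in>UNIV. 2 powr (- a x)) + t * (\<Sum>x\<in>UNIV. 2 powr (- b x))"
    by (simp add: sum.distrib sum_distrib_left)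
  also have "\<dots> \<le> (1 - t) * 1 + t * 1"
    using a b t by (intro add_mono mult_left_mono) (auto simp: Lam_def)
  finally have k: "(\<Sum>x\<in>UNIV. 2 powr (- ((1 - t) * a x + t * b x))) \<le> 1" by simp
  have "0 \<le> (1 - t) * a x + t * b x" for x using a b t by (auto simp: Lam_def)
  then show ?thesis unfolding e Lam_def using k by simp
qed

lemma first_order:
  fixes P ls l :: "'a::finite \<Rightarrow> real"
  assumes P: "\<And>x. P x > 0" and ls: "ls \<in> feasible P Lth"
    and min: "\<And>l'. l' \<in> feasible P Lth \<Longrightarrow> F P Lth ls \<le> F P Lth l'"
    and l: "l \<in> Lam"
    and m_def: "m = expect P (\<lambda>x. (ls x)^2)" and D_def: "D = Lth - expect P ls"
  shows "(\<Sum>x\<in>UNIV. P x * (1 + m / (2 * D^2) + ls x / D) * ls x)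
         \<le> (\<Sum>x\<in>UNIV. P x * (1 + m / (2 * D^2) + ls x / D) * l x)"
proof -
  have lsL: "ls \<in> Lam" and Dp: "D > 0" using ls by (auto simp: feasible_def D_def)
  define a where "a = expect P ls"
  define e where "e = (\<Sum>x\<in>UNIV. P x * (l x - ls x))"
  define c where "c = (\<Sum>x\<in>UNIV. P x * ls x * (l x - ls x))"
  define q where "q = (\<Sum>x\<in>UNIV. P x * (l x - ls x)^2)"
  define K0 where "K0 = 2 * D^2 * e + 2 * D * c + m * e"
  define K1 where "K1 = D * q - 2 * D * e^2"
  define t0 where "t0 = (if e \<le> 0 then 1 else min 1 (D / (2 * e)))"
  have t0p: "t0 > 0" and t01: "t0 \<le> 1" using Dp by (auto simp: t0_def)
  have key: "K0 + t * K1 \<ge> 0" if t: "0 < t" "t \<le> t0" for t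
  proof -
    define lt where "lt = (\<lambda>x. ls x + t * (l x - ls x))"
    have ltL: "lt \<in> Lam" unfolding lt_def using Lam_convex[OF lsL l] t t01 by simp
    have "expect P lt = (\<Sum>x\<in>UNIV. P x * ls x + t * (P x * (l x - ls x)))"
      unfolding expect_def lt_def by (intro sum.cong) (auto simp: algebra_simps)
    also have "\<dots> = a + t * e" by (simp add: sum.distrib sum_distrib_left a_def e_def expect_def)
    finally have Elt: "expect P lt = a + t * e" .
    have "expect P (\<lambda>x. (lt x)^2) = (\<Sum>x\<in>UNIV. P x * (ls x)^2 + 2 * t * (P x * ls x * (l x - ls x)) + t^2 * (P x * (l x - ls x)^2))"
      unfolding expect_def lt_def by (intro sum.cong) (auto simp: algebra_simps power2_eq_square)
    also have "\<dots> = m + 2 * t * c + t^2 * q"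
      by (simp add: sum.distrib sum_distrib_left m_def c_def q_def expect_def)
    finally have Elt2: "expect P (\<lambda>x. (lt x)^2) = m + 2 * t * c + t^2 * q" .
    have Dt: "D - t * e > 0"
    proof (cases "e \<le> 0")
      case True
      have "t * e \<le> 0" using True t by (simp add: mult_nonneg_nonpos)
      then show ?thesis using Dp by linarith
    next
      case False
      then have "t \<le> D / (2 * e)" using t by (simp add: t0_def)
      then have "t * e \<le> D / 2" using False by (simp add: field_simps)
      then show ?thesis using Dp by linarith
    qed
    have ltF: "lt \<in> feasible P Lth" using ltL Elt Dt by (simp add: feasible_def D_def a_def)
    have Fl: "F P Lth lt = a + t * e + (m + 2 * t * c + t^2 * q) / (2 * (D - t * e))"
      unfolding F_def Elt Elt2 by (simp add: D_def a_def)
    have Fs: "F P Lth ls = a + m / (2 * D)" unfolding F_def by (simp add: D_def a_def m_def)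
    have "F P Lth lt - F P Lth ls = t * (K0 + t * K1) / (2 * D * (D - t * e))"
      unfolding Fl Fs K0_def K1_def using Dp Dt
      by (simp add: field_simps power2_eq_square)
    moreover have "F P Lth lt - F P Lth ls \<ge> 0" using min[OF ltF] by simp
    ultimately have "t * (K0 + t * K1) / (2 * D * (D - t * e)) \<ge> 0" by simp
    moreover have pos: "2 * D * (D - t * e) > 0" using Dp Dt by simp
    ultimately have "t * (K0 + t * K1) \<ge> 0"
      by (metis divide_eq_0_iff le_less zero_le_divide_iff not_less)
    then show ?thesis using t by (simp add: zero_le_mult_iff)
  qed
  have K0: "K0 \<ge> 0"
  proof (rule ccontr)
    assume n: "\<not> K0 \<ge> 0"
    define t where "t = min t0 (- K0 / (2 * (\<bar>K1\<bar> + 1)))"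
    have "- K0 / (2 * (\<bar>K1\<bar> + 1)) > 0" using n by (intro divide_pos_pos) auto
    then have tp: "t > 0" using t0p by (simp add: t_def)
    have "t * K1 \<le> t * \<bar>K1\<bar>" using tp by (simp add: mult_left_mono)
    also have "\<dots> \<le> (- K0 / (2 * (\<bar>K1\<bar> + 1))) * \<bar>K1\<bar>" by (rule mult_right_mono) (auto simp: t_def)
    also have "\<dots> \<le> - K0 / 2"
    proof -
      have "\<bar>K1\<bar> / (\<bar>K1\<bar> + 1) \<le> 1" by simp
      then have "(- K0 / 2) * (\<bar>K1\<bar> / (\<bar>K1\<bar> + 1)) \<le> (- K0 / 2) * 1"
        using n by (intro mult_left_mono) auto
      then show ?thesis by (simp add: field_simps)
    qed
    finally have "K0 + t * K1 < 0" using n by linarith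
    moreover have "K0 + t * K1 \<ge> 0" using key[OF tp] by (simp add: t_def)
    ultimately show False by linarith
  qed
  have "(\<Sum>x\<in>UNIV. P x * (1 + m / (2 * D^2) + ls x / D) * l x) - (\<Sum>x\<in>UNIV. P x * (1 + m / (2 * D^2) + ls x / D) * ls x)
      = (\<Sum>x\<in>UNIV. (1 + m / (2 * D^2)) * (P x * (l x - ls x)) + (P x * ls x * (l x - ls x)) / D)"
    unfolding sum_subtractf[symmetric] by (intro sum.cong) (auto simp: algebra_simps diff_divide_distrib)
  also have "\<dots> = (1 + m / (2 * D^2)) * e + c / D"
    by (simp add: sum.distrib sum_distrib_left[symmetric] sum_divide_distrib[symmetric] e_def c_def)
  also have "\<dots> = K0 / (2 * D^2)" using Dp by (simp add: K0_def field_simps power2_eq_square)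
  also have "\<dots> \<ge> 0" using K0 by simp
  finally show ?thesis by simp
qed


lemma cont_coord [continuous_intros]: "continuous_on S (\<lambda>l::'a \<Rightarrow> real. l x)"
  by (rule continuous_on_subset[OF continuous_on_product_coordinates]) simp

lemma compact_box:
  fixes lo hi :: "'a \<Rightarrow> real"
  shows "compact {l::'a \<Rightarrow> real. \<forall>x. l x \<in> {lo x..hi x}}"
proof -
  have "compactin (product_topology (\<lambda>_. euclidean) UNIV) (PiE UNIV (\<lambda>x. {lo x..hi x}))"
    by (simp add: compactin_PiE)
  moreover have "PiE UNIV (\<lambda>x. {lo x..hi x}) = {l::'a \<Rightarrow> real. \<forall>x. l x \<in> {lo x..hi x}}"
    by (auto simp: PiE_def Pi_def)
  ultimately show ?thesis by (simp add: euclidean_product_topology)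
qed

lemma jensen_sq:
  fixes P l :: "'a::finite \<Rightarrow> real"
  assumes P: "\<And>x. P x > 0" and sP: "(\<Sum>x\<in>UNIV. P x) = 1"
  shows "(expect P l)^2 \<le> expect P (\<lambda>x. (l x)^2)"
proof -
  define a where "a = expect P l"
  have "0 \<le> (\<Sum>x\<in>UNIV. P x * (l x - a)^2)"
    using P by (intro sum_nonneg) (simp add: less_imp_le)
  also have "\<dots> = (\<Sum>x\<in>UNIV. P x * (l x)^2 - 2 * a * (P x * l x) + a^2 * P x)"
    by (intro sum.cong) (auto simp: algebra_simps power2_eq_square)
  also have "\<dots> = expect P (\<lambda>x. (l x)^2) - 2 * a * a + a^2"
    by (simp add: sum.distrib sum_subtractf sum_distrib_left[symmetric] sP expect_def a_def)
  finally show ?thesis by (simp add: a_def power2_eq_square)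
qed

lemma le_bound:
  fixes P l :: "'a::finite \<Rightarrow> real"
  assumes P: "\<And>x. P x > 0" and l0: "\<And>x. l x \<ge> 0" and E: "expect P l \<le> B"
  shows "l x \<le> B / P x"
proof -
  have "P x * l x \<le> expect P l" unfolding expect_def
    using P l0 by (intro member_le_sum) (auto intro: mult_nonneg_nonneg less_imp_le)
  then have "P x * l x \<le> B" using E by linarith
  then show ?thesis using P[of x] by (simp add: field_simps)
qed

lemma exists_min:
  fixes P l0 :: "'a::finite \<Rightarrow> real"
  assumes P: "\<And>x. P x > 0" and sP: "(\<Sum>x\<in>UNIV. P x) = 1" and Lth: "Lth > 0"
    and l0: "l0 \<in> feasible P Lth"
  shows "\<exists>ls\<in>feasible P Lth. \<forall>l\<in>feasible P Lth. F P Lth ls \<le> F P Lth l"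
proof -
  define M where "M = F P Lth l0"
  define d where "d = min (Lth / 2) (Lth^2 / (8 * (\<bar>M\<bar> + 1)))"
  have dp: "d > 0" using Lth by (simp add: d_def)
  have big: "F P Lth l > M" if l: "l \<in> feasible P Lth" and El: "expect P l > Lth - d" for l
  proof -
    have lL: "l \<in> Lam" and lt: "expect P l < Lth" using l by (auto simp: feasible_def)
    have l0': "\<And>x. l x \<ge> 0" using lL by (simp add: Lam_def)
    have Ea: "expect P l \<ge> 0" unfolding expect_def using P l0' by (intro sum_nonneg) (simp add: less_imp_le)
    define D where "D = Lth - expect P l"
    have Dp: "D > 0" and Dd: "D < d" using lt El by (auto simp: D_def)
    have h2: "expect P l \<ge> Lth / 2" using El d_def by linarith
    have "(Lth / 2)^2 \<le> (expect P l)^2" using h2 Lth by (intro power_mono) auto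
    also have "\<dots> \<le> expect P (\<lambda>x. (l x)^2)" by (rule jensen_sq[OF P sP])
    finally have mb: "Lth^2 / 4 \<le> expect P (\<lambda>x. (l x)^2)" by (simp add: power_divide)
    have "Lth^2 / (8 * d) \<le> expect P (\<lambda>x. (l x)^2) / (2 * D)"
    proof -
      have "Lth^2 / (8 * d) \<le> Lth^2 / (8 * D)" using Dp Dd by (intro divide_left_mono) auto
      also have "\<dots> = (Lth^2 / 4) / (2 * D)" by simp
      also have "\<dots> \<le> expect P (\<lambda>x. (l x)^2) / (2 * D)" using mb Dp by (intro divide_right_mono) auto
      finally show ?thesis .
    qed
    moreover have "\<bar>M\<bar> + 1 \<le> Lth^2 / (8 * d)"
    proof -
      have "d \<le> Lth^2 / (8 * (\<bar>M\<bar> + 1))" by (simp add: d_def)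
      then have "8 * d * (\<bar>M\<bar> + 1) \<le> Lth^2" by (simp add: field_simps)
      then show ?thesis using dp by (simp add: field_simps)
    qed
    ultimately have "\<bar>M\<bar> + 1 \<le> expect P (\<lambda>x. (l x)^2) / (2 * D)" by linarith
    then show ?thesis unfolding F_def D_def[symmetric] using Ea by linarith
  qed
  define K where "K = {l::'a \<Rightarrow> real. \<forall>x. l x \<in> {0..Lth / P x}} \<inter> {l. (\<Sum>x\<in>UNIV. 2 powr (- l x)) \<le> 1}
      \<inter> {l. expect P l \<le> Lth - d}"
  have cK: "compact K" unfolding K_def
  proof (intro compact_Int_closed closed_Collect_le)
    show "compact {l::'a \<Rightarrow> real. \<forall>x. l x \<in> {0..Lth / P x}}" by (rule compact_box)
    show "continuous_on UNIV (\<lambda>l::'a \<Rightarrow> real. \<Sum>x\<in>UNIV. 2 powr (- l x))"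
      by (intro continuous_intros) auto
    show "continuous_on UNIV (\<lambda>l::'a \<Rightarrow> real. expect P l)" unfolding expect_def
      by (intro continuous_intros)
  qed (intro continuous_intros)+
  have inK: "l \<in> K" if "l \<in> feasible P Lth" "expect P l \<le> Lth - d" for l
  proof -
    have lL: "l \<in> Lam" using that by (simp add: feasible_def)
    have "\<And>x. l x \<ge> 0" using lL by (simp add: Lam_def)
    moreover have "l x \<le> Lth / P x" for x
      by (rule le_bound[OF P]) (use \<open>\<And>x. l x \<ge> 0\<close> that dp in auto)
    ultimately show ?thesis unfolding K_def using lL that by (auto simp: Lam_def)
  qed
  have l0K: "l0 \<in> K"
  proof (rule inK[OF l0])
    show "expect P l0 \<le> Lth - d"
    proof (rule ccontr)
      assume "\<not> expect P l0 \<le> Lth - d"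
      then have "F P Lth l0 > M" using big[OF l0] by simp
      then show False by (simp add: M_def)
    qed
  qed
  have Kf: "l \<in> feasible P Lth" if "l \<in> K" for l
    using that dp unfolding K_def feasible_def Lam_def by auto
  have "continuous_on K (F P Lth)"
  proof -
    have "\<forall>l\<in>K. Lth - expect P l \<noteq> 0" using dp unfolding K_def by auto
    then show ?thesis unfolding F_def expect_def
      by (intro continuous_intros) auto
  qed
  then obtain ls where ls: "ls \<in> K" and lsm: "\<forall>l\<in>K. F P Lth ls \<le> F P Lth l"
    using continuous_attains_inf[OF cK] l0K by blast
  show ?thesis
  proof (intro bexI ballI)
    show "ls \<in> feasible P Lth" by (rule Kf[OF ls])
    fix l assume l: "l \<in> feasible P Lth"
    show "F P Lth ls \<le> F P Lth l"
    proof (cases "expect P l \<le> Lth - d")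
      case True then show ?thesis using lsm inK[OF l] by blast
    next
      case False
      then have "F P Lth l > M" using big[OF l] by simp
      moreover have "F P Lth ls \<le> M" using lsm l0K by (simp add: M_def)
      ultimately show ?thesis by simp
    qed
  qed
qed


lemma gt_pos:
  assumes P: "\<And>x. P x > 0" and Q: "Q \<in> pmfs" and z: "z \<ge> 0"
  shows "gt z Q P x > 0"
proof -
  have "Q x \<ge> 0" using Q by (simp add: pmfs_def)
  then have "z * sqrt (Q x * P x) \<ge> 0" using P[of x] z by simp
  moreover have "(1 + z^2/2) * P x > 0" using P[of x] by (simp add: add_pos_nonneg)
  ultimately show ?thesis unfolding gt_def by linarith
qed

theorem theorem4:
  fixes P :: "'a::finite \<Rightarrow> real" and Lth :: real
  assumes "card (UNIV :: 'a set) \<ge> 2"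
    and "\<forall>x. P x > 0"
    and "P \<in> pmfs"
    and "Lth > 0"
    and "entropy P + log 2 (1 + 1 / sqrt 2) < Lth"
  shows "Delta_star P Lth =
           (INF l\<in>feasible P Lth. expect P l + expect P (\<lambda>x. (l x)^2) / (2 * (Lth - expect P l)))
    \<and> is_max_val {(INF l\<in>feasible P Lth. obj P Lth z Q l) | z Q. z \<ge> 0 \<and> Q \<in> pmfs} (Delta_star P Lth)
    \<and> is_max_val {gibbs_val P Lth z Q | z Q. z \<ge> 0 \<and> Q \<in> pmfs} (Delta_star P Lth)
    \<and> (\<forall>z0 Q0. z0 \<ge> 0 \<longrightarrow> Q0 \<in> pmfs \<longrightarrow>
         (\<forall>z Q. z \<ge> 0 \<longrightarrow> Q \<in> pmfs \<longrightarrow> gibbs_val P Lth z Q \<le> gibbs_val P Lth z0 Q0) \<longrightarrow>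
         (let ls = (\<lambda>x. - log 2 (gt z0 Q0 P x / (\<Sum>x'\<in>UNIV. gt z0 Q0 P x')))
          in ls \<in> feasible P Lth \<and> Phi P Lth ls = Delta_star P Lth
             \<and> (\<forall>l\<in>feasible P Lth. Phi P Lth l = Delta_star P Lth \<longrightarrow> l = ls)))"
proof -
  note card = assms(1)
  have P: "\<And>x. P x > 0" using assms(2) by blast
  have sP: "(\<Sum>x\<in>UNIV. P x) = 1" using assms(3) by (simp add: pmfs_def)
  have Lth: "Lth > 0" by (rule assms(4))
  define l0 where "l0 = (\<lambda>x. - log 2 (P x / (\<Sum>y\<in>UNIV. P y)))"
  have l0L: "l0 \<in> Lam" unfolding l0_def by (rule gibbs_ls(1)[OF P])
  have "expect P l0 = entropy P"
    unfolding l0_def sP expect_def entropy_def by (simp add: sum_negf)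
  moreover have "log 2 (1 + 1 / sqrt 2) > 0"
  proof -
    have "1 < 1 + 1 / sqrt (2::real)" by simp
    moreover have "0 < 1 + 1 / sqrt (2::real)" by (simp add: add_pos_pos)
    ultimately show ?thesis by (subst zero_less_log_cancel_iff) auto
  qed
  ultimately have "expect P l0 < Lth" using assms(5) by linarith
  then have l0F: "l0 \<in> feasible P Lth" using l0L by (simp add: feasible_def)
  obtain ls where lsF: "ls \<in> feasible P Lth" and lsmin: "\<And>l. l \<in> feasible P Lth \<Longrightarrow> F P Lth ls \<le> F P Lth l"
    using exists_min[OF P sP Lth l0F] by blast
  have lsL: "ls \<in> Lam" and lslt: "expect P ls < Lth" using lsF by (auto simp: feasible_def)
  have ls0: "\<And>x. ls x \<ge> 0" using lsL by (simp add: Lam_def)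
  define m where "m = expect P (\<lambda>x. (ls x)^2)"
  define D where "D = Lth - expect P ls"
  have mp: "m > 0" unfolding m_def by (rule m_pos[OF card P lsL])
  have Dp: "D > 0" using lslt by (simp add: D_def)
  note op = opt_point[OF P sP ls0 m_def D_def Dp mp]
  define zs where "zs = sqrt m / D"
  define Qs where "Qs = (\<lambda>x. P x * (ls x)^2 / m)"
  have Qs: "Qs \<in> pmfs" and zs: "zs \<ge> 0" and objs: "obj P Lth zs Qs ls = F P Lth ls"
    and gts: "\<And>x. gt zs Qs P x = P x * (1 + m / (2 * D^2) + ls x / D)"
    using op unfolding zs_def[symmetric] Qs_def[symmetric] by blast+
  define V where "V = F P Lth ls"
  have FO: "(\<Sum>x\<in>UNIV. gt zs Qs P x * ls x) \<le> (\<Sum>x\<in>UNIV. gt zs Qs P x * l x)" if "l \<in> Lam" for l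
    unfolding gts using first_order[OF P lsF lsmin that m_def D_def] by simp
  have gpos: "\<And>x. gt z Q P x > 0" if "z \<ge> 0" "Q \<in> pmfs" for z Q
    by (rule gt_pos[OF P that(2) that(1)])
  have gib_obj: "gibbs_val P Lth z Q \<le> obj P Lth z Q l" if "z \<ge> 0" "Q \<in> pmfs" "l \<in> Lam" for z Q l
  proof -
    have "(\<Sum>x\<in>UNIV. gt z Q P x * log 2 ((\<Sum>y\<in>UNIV. gt z Q P y) / gt z Q P x)) \<le> (\<Sum>x\<in>UNIV. gt z Q P x * l x)"
      by (rule gibbs_ineq(1)[OF gpos[OF that(1,2)] that(3)])
    then show ?thesis unfolding gibbs_val_def obj_def by linarith
  qed
  have gibs: "gibbs_val P Lth zs Qs = V"
  proof -
    let ?g = "gt zs Qs P"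
    have "(\<Sum>x\<in>UNIV. ?g x * log 2 ((\<Sum>y\<in>UNIV. ?g y) / ?g x)) = (\<Sum>x\<in>UNIV. ?g x * ls x)"
    proof (rule antisym)
      show "(\<Sum>x\<in>UNIV. ?g x * log 2 ((\<Sum>y\<in>UNIV. ?g y) / ?g x)) \<le> (\<Sum>x\<in>UNIV. ?g x * ls x)"
        by (rule gibbs_ineq(1)[OF gpos[OF zs Qs] lsL])
      have "(\<Sum>x\<in>UNIV. ?g x * ls x) \<le> (\<Sum>x\<in>UNIV. ?g x * (- log 2 (?g x / (\<Sum>y\<in>UNIV. ?g y))))"
        by (rule FO[OF gibbs_ls(1)[OF gpos[OF zs Qs]]])
      also have "\<dots> = (\<Sum>x\<in>UNIV. ?g x * log 2 ((\<Sum>y\<in>UNIV. ?g y) / ?g x))"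
        by (rule gibbs_ls(2)[OF gpos[OF zs Qs]])
      finally show "(\<Sum>x\<in>UNIV. ?g x * ls x) \<le> (\<Sum>x\<in>UNIV. ?g x * log 2 ((\<Sum>y\<in>UNIV. ?g y) / ?g x))" .
    qed
    then have "gibbs_val P Lth zs Qs = obj P Lth zs Qs ls" by (simp add: gibbs_val_def obj_def)
    then show ?thesis using objs by (simp add: V_def)
  qed
  have PhiF: "Phi P Lth l = F P Lth l" if "l \<in> feasible P Lth" for l
    by (rule Phi_eq[OF card P sP that])
  have DeltaF: "Delta_star P Lth = (INF l\<in>feasible P Lth. F P Lth l)"
    unfolding Delta_star_def using PhiF by (intro INF_cong) auto
  have DeltaV: "Delta_star P Lth = V"
    unfolding DeltaF V_def by (rule cInf_eq_minimum) (use lsF lsmin in auto)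
  have objV: "obj P Lth z Q ls \<le> V" if "z \<ge> 0" "Q \<in> pmfs" for z Q
    unfolding V_def by (rule obj_le_F[OF P that(2) that(1) lslt])
  have part1: "Delta_star P Lth =
           (INF l\<in>feasible P Lth. expect P l + expect P (\<lambda>x. (l x)^2) / (2 * (Lth - expect P l)))"
    unfolding DeltaF F_def by simp
  have part2: "is_max_val {(INF l\<in>feasible P Lth. obj P Lth z Q l) | z Q. z \<ge> 0 \<and> Q \<in> pmfs} (Delta_star P Lth)"
    unfolding is_max_val_def DeltaV
  proof (intro conjI ballI)
    have "(INF l\<in>feasible P Lth. obj P Lth zs Qs l) = V"
    proof (rule cInf_eq_minimum)
      show "V \<in> (\<lambda>l. obj P Lth zs Qs l) ` feasible P Lth"
        using lsF objs unfolding V_def by (metis image_eqI)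
      fix y assume "y \<in> (\<lambda>l. obj P Lth zs Qs l) ` feasible P Lth"
      then obtain l where l: "l \<in> feasible P Lth" and y: "y = obj P Lth zs Qs l" by blast
      have "l \<in> Lam" using l by (simp add: feasible_def)
      then have "obj P Lth zs Qs ls \<le> obj P Lth zs Qs l" using FO by (simp add: obj_def)
      then show "V \<le> y" using objs y V_def by simp
    qed
    then show "V \<in> {(INF l\<in>feasible P Lth. obj P Lth z Q l) | z Q. z \<ge> 0 \<and> Q \<in> pmfs}"
      using zs Qs by (intro CollectI exI[of _ zs] exI[of _ Qs]) simp
    fix y assume "y \<in> {(INF l\<in>feasible P Lth. obj P Lth z Q l) | z Q. z \<ge> 0 \<and> Q \<in> pmfs}"
    then obtain z Q where zQ: "z \<ge> 0" "Q \<in> pmfs" and y: "y = (INF l\<in>feasible P Lth. obj P Lth z Q l)" by blast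
    have bdd: "bdd_below ((\<lambda>l. obj P Lth z Q l) ` feasible P Lth)"
      by (rule bdd_belowI2[where m="gibbs_val P Lth z Q"]) (use gib_obj zQ in \<open>auto simp: feasible_def\<close>)
    have "y \<le> obj P Lth z Q ls" unfolding y by (rule cINF_lower[OF bdd lsF])
    then show "y \<le> V" using objV[OF zQ] by linarith
  qed
  have gibV: "gibbs_val P Lth z Q \<le> V" if "z \<ge> 0" "Q \<in> pmfs" for z Q
    using gib_obj[OF that lsL] objV[OF that] by linarith
  have part3: "is_max_val {gibbs_val P Lth z Q | z Q. z \<ge> 0 \<and> Q \<in> pmfs} (Delta_star P Lth)"
    unfolding is_max_val_def DeltaV
  proof (intro conjI ballI)
    show "V \<in> {gibbs_val P Lth z Q | z Q. z \<ge> 0 \<and> Q \<in> pmfs}"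
      using zs Qs gibs by (intro CollectI exI[of _ zs] exI[of _ Qs]) simp
    fix y assume "y \<in> {gibbs_val P Lth z Q | z Q. z \<ge> 0 \<and> Q \<in> pmfs}"
    then show "y \<le> V" using gibV by blast
  qed
  have part4: "(\<forall>z0 Q0. z0 \<ge> 0 \<longrightarrow> Q0 \<in> pmfs \<longrightarrow>
         (\<forall>z Q. z \<ge> 0 \<longrightarrow> Q \<in> pmfs \<longrightarrow> gibbs_val P Lth z Q \<le> gibbs_val P Lth z0 Q0) \<longrightarrow>
         (let ls = (\<lambda>x. - log 2 (gt z0 Q0 P x / (\<Sum>x'\<in>UNIV. gt z0 Q0 P x')))
          in ls \<in> feasible P Lth \<and> Phi P Lth ls = Delta_star P Lth
             \<and> (\<forall>l\<in>feasible P Lth. Phi P Lth l = Delta_star P Lth \<longrightarrow> l = ls)))"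
  proof (intro allI impI)
    fix z0 Q0 assume z0: "z0 \<ge> 0" and Q0: "Q0 \<in> pmfs"
      and mx: "\<forall>z Q. z \<ge> 0 \<longrightarrow> Q \<in> pmfs \<longrightarrow> gibbs_val P Lth z Q \<le> gibbs_val P Lth z0 Q0"
    have "V \<le> gibbs_val P Lth z0 Q0" using mx zs Qs gibs by metis
    then have g0V: "gibbs_val P Lth z0 Q0 = V" using gibV[OF z0 Q0] by linarith
    define ls0 where "ls0 = (\<lambda>x. - log 2 (gt z0 Q0 P x / (\<Sum>x'\<in>UNIV. gt z0 Q0 P x')))"
    have uniq: "l = ls0" if l: "l \<in> feasible P Lth" and pl: "Phi P Lth l = V" for l
    proof -
      have lL: "l \<in> Lam" and llt: "expect P l < Lth" using l by (auto simp: feasible_def)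
      have "obj P Lth z0 Q0 l \<le> F P Lth l" by (rule obj_le_F[OF P Q0 z0 llt])
      also have "\<dots> = V" using PhiF[OF l] pl by simp
      finally have "obj P Lth z0 Q0 l \<le> gibbs_val P Lth z0 Q0" using g0V by simp
      moreover have "gibbs_val P Lth z0 Q0 \<le> obj P Lth z0 Q0 l" by (rule gib_obj[OF z0 Q0 lL])
      ultimately have "gibbs_val P Lth z0 Q0 = obj P Lth z0 Q0 l" by simp
      then have "(\<Sum>x\<in>UNIV. gt z0 Q0 P x * log 2 ((\<Sum>y\<in>UNIV. gt z0 Q0 P y) / gt z0 Q0 P x))
          = (\<Sum>x\<in>UNIV. gt z0 Q0 P x * l x)" by (simp add: gibbs_val_def obj_def)
      from gibbs_ineq(2)[OF gpos[OF z0 Q0] lL this] show ?thesis by (simp add: ls0_def)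
    qed
    have PhiV: "Phi P Lth ls = V" using PhiF[OF lsF] V_def by simp
    have e: "ls = ls0" by (rule uniq[OF lsF PhiV])
    show "let ls = (\<lambda>x. - log 2 (gt z0 Q0 P x / (\<Sum>x'\<in>UNIV. gt z0 Q0 P x')))
          in ls \<in> feasible P Lth \<and> Phi P Lth ls = Delta_star P Lth
             \<and> (\<forall>l\<in>feasible P Lth. Phi P Lth l = Delta_star P Lth \<longrightarrow> l = ls)"
      unfolding Let_def ls0_def[symmetric] DeltaV
      using lsF PhiV uniq e by blast
  qed
  show ?thesis using part1 part2 part3 part4 by blast
qed

end
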